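(* Let $N\ge 3$, $K\ge 2$ and $L$ be integers with $1\le L<N-1$, let $M=N(L+1)^{K-1}$, and define costs $d_m=L$ for $m\in[1:N]$ and $d_m=L+1$ for $m\in[N+1:M]$. Let $C=\left(\sum_{k=0}^{K-1}N^{-k}\right)^{-1}$ and $1\le D\le 1/C$. Let $\mathcal{F}_D$ be the set of probability vectors $P=(p_1,\dots,p_M)$ with $\frac1L\sum_{m=1}^M p_md_m=D$, and $U$ the uniform distribution on $[1:M]$. (i) For every $0<\alpha<\infty$ (including $\alpha=1$), the unique minimizer of $D_\alpha(P\|U)$ over $\mathcal{F}_D$ is $$p_m=\begin{cases}\dfrac{1-L(D-1)}{N}, & m\in[1:N],\\[2mm]\dfrac{L(D-1)}{N(L+1)^{K-1}-N}, & m\in[N+1:M].\end{cases}$$ (ii) For $\alpha=\infty$, $P\in\mathcal{F}_D$ minimizes $D_\infty(P\|U)$ over $\mathcal{F}_D$ if and only if $p_m=\frac{1-L(D-1)}{N}$ for all $m\in[1:N]$ and $(p_m)_{m\in[N+1:M]}$ is any nonnegative vector with $\sum_{m=N+1}^{M}p_m=L(D-1)$ and $p_m\le\frac{1-L(D-1)}{N}$ for each $m\in[N+1:M]$.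
   Context: Notation: $[i:j]=\{i,\dots,j\}$; natural logarithms. Rényi divergence for probability vectors $P,U$ on $[1:M]$ with $u_m>0$: $D_\alpha(P\|U)=\frac{1}{\alpha-1}\log\sum_m p_m^\alpha u_m^{1-\alpha}$ for $0<\alpha<\infty,\alpha\ne1$; $D_1(P\|U)=\sum_m p_m\log\frac{p_m}{u_m}$ (with $0\log0=0$); $D_\infty(P\|U)=\log\max_m\frac{p_m}{u_m}$. (Interpretation: the $N(L+1)^{K-1}$ query options of the paper's alternative probabilistic PIR scheme with $N$ databases, $K$ messages and message length $L$; the first $N$ options have download cost $L$, the rest $L+1$; $D$ is the expected download cost normalized by $L$.) *)

theory Defs
  imports Complex_Main
begin

text \<open>Probability vectors on [1:M] are modelled as functions nat => real;
  only the values on {1..M} matter.\<close>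

definition renyi_div :: "real \<Rightarrow> nat \<Rightarrow> (nat \<Rightarrow> real) \<Rightarrow> (nat \<Rightarrow> real) \<Rightarrow> real" where
  "renyi_div \<alpha> M p u =
     (if \<alpha> = 1 then (\<Sum>m\<in>{1..M}. (if p m = 0 then 0 else p m * ln (p m / u m)))
      else 1 / (\<alpha> - 1) * ln (\<Sum>m\<in>{1..M}. p m powr \<alpha> * u m powr (1 - \<alpha>)))"

definition renyi_div_inf :: "nat \<Rightarrow> (nat \<Rightarrow> real) \<Rightarrow> (nat \<Rightarrow> real) \<Rightarrow> real" where
  "renyi_div_inf M p u = ln (Max ((\<lambda>m. p m / u m) ` {1..M}))"

definition num_opts :: "nat \<Rightarrow> nat \<Rightarrow> nat \<Rightarrow> nat" where
  "num_opts N K L = N * (L + 1) ^ (K - 1)"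

definition cost :: "nat \<Rightarrow> nat \<Rightarrow> nat \<Rightarrow> real" where
  "cost N L m = (if m \<le> N then real L else real L + 1)"

definition uniform_dist :: "nat \<Rightarrow> nat \<Rightarrow> real" where
  "uniform_dist M m = 1 / real M"

definition const_C :: "nat \<Rightarrow> nat \<Rightarrow> real" where
  "const_C N K = 1 / (\<Sum>k<K. 1 / real N ^ k)"

definition feasible :: "nat \<Rightarrow> nat \<Rightarrow> nat \<Rightarrow> real \<Rightarrow> (nat \<Rightarrow> real) set" where
  "feasible N K L D = {p. (\<forall>m\<in>{1..num_opts N K L}. 0 \<le> p m)
      \<and> (\<Sum>m\<in>{1..num_opts N K L}. p m) = 1
      \<and> (1 / real L) * (\<Sum>m\<in>{1..num_opts N K L}. p m * cost N L m) = D}"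

end

theory Submission
  imports Defs
begin

definition tang :: "(real \<Rightarrow> real) \<Rightarrow> bool" where
  "tang g \<longleftrightarrow> (\<forall>c>0. \<exists>d. \<forall>t. 0 \<le> t \<longrightarrow> t \<noteq> c \<longrightarrow> g c + d * (t - c) < g t)"

lemma tangent_strict:
  fixes g g' :: "real \<Rightarrow> real"
  assumes der: "\<And>x. 0 < x \<Longrightarrow> (g has_real_derivative g' x) (at x)"
    and mono: "\<And>x y. 0 < x \<Longrightarrow> x < y \<Longrightarrow> g' x < g' y"
    and c: "0 < c" and t: "0 < t" "t \<noteq> c"
  shows "g c + g' c * (t - c) < g t"
proof (cases "t < c")
  case True
  obtain z where z: "t < z" "z < c" "g c - g t = (c - t) * g' z"
    using MVT2[OF True, of g g'] der t by force
  have "g' z < g' c" using mono z t by simp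
  hence "(c - t) * g' z < (c - t) * g' c" using True by simp
  thus ?thesis using z by (simp add: algebra_simps)
next
  case False
  hence lt: "c < t" using t by simp
  obtain z where z: "c < z" "z < t" "g t - g c = (t - c) * g' z"
    using MVT2[OF lt, of g g'] der c by force
  have "g' c < g' z" using mono z c by simp
  hence "(t - c) * g' c < (t - c) * g' z" using lt by simp
  thus ?thesis using z by (simp add: algebra_simps)
qed

lemma tang_intro:
  fixes g g' :: "real \<Rightarrow> real"
  assumes der: "\<And>x. 0 < x \<Longrightarrow> (g has_real_derivative g' x) (at x)"
    and mono: "\<And>x y. 0 < x \<Longrightarrow> x < y \<Longrightarrow> g' x < g' y"
    and zero: "\<And>c. 0 < c \<Longrightarrow> g c + g' c * (0 - c) < g 0"
  shows "tang g"
  unfolding tang_def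
proof (intro allI impI)
  fix c :: real assume c: "0 < c"
  show "\<exists>d. \<forall>t. 0 \<le> t \<longrightarrow> t \<noteq> c \<longrightarrow> g c + d * (t - c) < g t"
  proof (intro exI allI impI)
    fix t :: real assume "0 \<le> t" "t \<noteq> c"
    thus "g c + g' c * (t - c) < g t"
      using tangent_strict[OF der mono c] zero[OF c] by (cases "t = 0") auto
  qed
qed

lemma tang_pow_gt1:
  fixes \<alpha> :: real assumes "1 < \<alpha>"
  shows "tang (\<lambda>t. t powr \<alpha>)"
proof (rule tang_intro[where g' = "\<lambda>x. \<alpha> * x powr (\<alpha> - 1)"])
  show "((\<lambda>t. t powr \<alpha>) has_real_derivative \<alpha> * x powr (\<alpha> - 1)) (at x)" if "0 < x" for x
    using has_real_derivative_powr[OF that] by simp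
  show "\<alpha> * x powr (\<alpha> - 1) < \<alpha> * y powr (\<alpha> - 1)" if "0 < x" "x < y" for x y
    using powr_less_mono2[of "\<alpha> - 1" x y] that assms by simp
  show "c powr \<alpha> + \<alpha> * c powr (\<alpha> - 1) * (0 - c) < 0 powr \<alpha>" if "0 < c" for c
  proof -
    have "c powr (\<alpha> - 1) * c = c powr \<alpha>" using that by (simp add: powr_diff)
    moreover have "0 < c powr \<alpha>" using that by simp
    ultimately show ?thesis using assms
      by (simp add: algebra_simps)
  qed
qed

lemma tang_pow_lt1:
  fixes \<alpha> :: real assumes "0 < \<alpha>" "\<alpha> < 1"
  shows "tang (\<lambda>t. - (t powr \<alpha>))"
proof (rule tang_intro[where g' = "\<lambda>x. - (\<alpha> * x powr (\<alpha> - 1))"])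
  show "((\<lambda>t. - (t powr \<alpha>)) has_real_derivative - (\<alpha> * x powr (\<alpha> - 1))) (at x)" if "0 < x" for x
    using has_real_derivative_powr[OF that] by (intro DERIV_minus) simp
  show "- (\<alpha> * x powr (\<alpha> - 1)) < - (\<alpha> * y powr (\<alpha> - 1))" if "0 < x" "x < y" for x y
    using powr_less_mono2_neg[of "\<alpha> - 1" x y] that assms by simp
  show "- (c powr \<alpha>) + - (\<alpha> * c powr (\<alpha> - 1)) * (0 - c) < - (0 powr \<alpha>)" if "0 < c" for c
  proof -
    have "c powr (\<alpha> - 1) * c = c powr \<alpha>" using that by (simp add: powr_diff)
    moreover have "0 < c powr \<alpha>" using that by simp
    ultimately show ?thesis using assms
      by (simp add: algebra_simps)
  qed
qed

lemma tang_xlogx: "tang (\<lambda>t. t * ln t)"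
proof (rule tang_intro[where g' = "\<lambda>x. ln x + 1"])
  show "((\<lambda>t. t * ln t) has_real_derivative ln x + 1) (at x)" if "0 < x" for x
    using that by (auto intro!: derivative_eq_intros)
  show "ln x + 1 < ln y + 1" if "0 < x" "x < y" for x y :: real using that ln_less_cancel_iff[of x y] by simp
  show "c * ln c + (ln c + 1) * (0 - c) < 0 * ln 0" if "0 < c" for c :: real
  proof -
    have "c * ln c + (ln c + 1) * (0 - c) = - c" by (simp add: algebra_simps)
    thus ?thesis using that by simp
  qed
qed


lemma block_bound:
  fixes p :: "nat \<Rightarrow> real" and g :: "real \<Rightarrow> real"
  assumes fin: "finite I" and nonneg: "\<forall>i\<in>I. 0 \<le> p i"
    and s: "sum p I = real (card I) * c" and c: "0 \<le> c" and tg: "tang g"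
  shows "real (card I) * g c \<le> (\<Sum>i\<in>I. g (p i))"
    and "(\<Sum>i\<in>I. g (p i)) = real (card I) * g c \<Longrightarrow> \<forall>i\<in>I. p i = c"
proof -
  have both: "real (card I) * g c \<le> (\<Sum>i\<in>I. g (p i)) \<and>
     ((\<Sum>i\<in>I. g (p i)) = real (card I) * g c \<longrightarrow> (\<forall>i\<in>I. p i = c))"
  proof (cases "c = 0")
    case True
    have "sum p I = 0" using s True by simp
    hence z: "\<forall>i\<in>I. p i = 0" using sum_nonneg_eq_0_iff[OF fin] nonneg by blast
    hence "(\<Sum>i\<in>I. g (p i)) = (\<Sum>i\<in>I. g 0)" by simp
    thus ?thesis using z True by simp
  next
    case False
    hence "0 < c" using c by simp
    then obtain d where d: "\<And>t. 0 \<le> t \<Longrightarrow> t \<noteq> c \<Longrightarrow> g c + d * (t - c) < g t"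
      using tg unfolding tang_def by blast
    have le: "\<forall>i\<in>I. g c + d * (p i - c) \<le> g (p i)"
      using d nonneg by (metis order.order_iff_strict add_0_right diff_self mult_zero_right)
    have eq: "(\<Sum>i\<in>I. g c + d * (p i - c)) = real (card I) * g c"
      by (simp add: sum.distrib sum_subtractf sum_distrib_left[symmetric] s)
    have 1: "real (card I) * g c \<le> (\<Sum>i\<in>I. g (p i))"
      using sum_mono[of I "\<lambda>i. g c + d * (p i - c)" "\<lambda>i. g (p i)"] le eq by simp
    have 2: "\<forall>i\<in>I. p i = c" if h: "(\<Sum>i\<in>I. g (p i)) = real (card I) * g c"
    proof (rule ccontr)
      assume "\<not> (\<forall>i\<in>I. p i = c)"
      then obtain j where j: "j \<in> I" "p j \<noteq> c" by blast
      have "g c + d * (p j - c) < g (p j)" using d j nonneg by blast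
      hence "(\<Sum>i\<in>I. g c + d * (p i - c)) < (\<Sum>i\<in>I. g (p i))"
        using sum_strict_mono_ex1[OF fin le] j by blast
      thus False using eq h by simp
    qed
    show ?thesis using 1 2 by blast
  qed
  show "real (card I) * g c \<le> (\<Sum>i\<in>I. g (p i))" using both by blast
  show "(\<Sum>i\<in>I. g (p i)) = real (card I) * g c \<Longrightarrow> \<forall>i\<in>I. p i = c" using both by blast
qed

lemma part_i_generic:
  fixes N M :: nat and a b :: real and ps :: "nat \<Rightarrow> real" and g :: "real \<Rightarrow> real"
    and R :: "(nat \<Rightarrow> real) \<Rightarrow> real"
  assumes NM: "N \<le> M"
    and Fc: "\<forall>P\<in>F. (\<forall>m\<in>{1..M}. 0 \<le> P m) \<and> sum P {1..N} = real N * a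
                   \<and> sum P {N+1..M} = (real M - real N) * b"
    and a: "0 \<le> a" and b: "0 \<le> b"
    and ps: "ps \<in> F" "\<forall>m\<in>{1..N}. ps m = a" "\<forall>m\<in>{N+1..M}. ps m = b"
    and tg: "tang g"
    and rel: "\<forall>P\<in>F. \<forall>Q\<in>F. R P \<le> R Q \<longleftrightarrow>
                 (\<Sum>m\<in>{1..M}. g (P m)) \<le> (\<Sum>m\<in>{1..M}. g (Q m))"
  shows "\<forall>P\<in>F. (\<forall>Q\<in>F. R P \<le> R Q) \<longleftrightarrow> (\<forall>m\<in>{1..M}. P m = ps m)"
proof -
  define \<Phi> where "\<Phi> P = (\<Sum>m\<in>{1..M}. g (P m))" for P :: "nat \<Rightarrow> real"
  have split: "sum f {1..M} = sum f {1..N} + sum f {N+1..M}" for f :: "nat \<Rightarrow> real"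
    using sum.ub_add_nat[of 1 N f "M - N"] NM by simp
  have cA: "card {1..N} = N" by simp
  have cB: "real (card {N+1..M}) = real M - real N" using NM by simp
  have val: "\<Phi> ps = real N * g a + (real M - real N) * g b"
  proof -
    have "(\<Sum>m\<in>{1..N}. g (ps m)) = (\<Sum>m\<in>{1..N}. g a)" using ps(2) by simp
    moreover have "(\<Sum>m\<in>{N+1..M}. g (ps m)) = (\<Sum>m\<in>{N+1..M}. g b)" using ps(3) by simp
    ultimately show ?thesis unfolding \<Phi>_def using split cB by simp
  qed
  have low: "\<Phi> ps \<le> \<Phi> P \<and> (\<Phi> P = \<Phi> ps \<longrightarrow> (\<forall>m\<in>{1..M}. P m = ps m))" if P: "P \<in> F" for P
  proof -
    have nn: "\<forall>m\<in>{1..M}. 0 \<le> P m" and sA: "sum P {1..N} = real N * a"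
      and sB: "sum P {N+1..M} = (real M - real N) * b" using Fc P by auto
    have nnA: "\<forall>m\<in>{1..N}. 0 \<le> P m" using nn NM by auto
    have nnB: "\<forall>m\<in>{N+1..M}. 0 \<le> P m" using nn by auto
    note A = block_bound[of "{1..N}" P a g, OF _ nnA _ a tg]
    note B = block_bound[of "{N+1..M}" P b g, OF _ nnB _ b tg]
    have A1: "real N * g a \<le> (\<Sum>m\<in>{1..N}. g (P m))" using A(1) sA by simp
    have A2: "(\<Sum>m\<in>{1..N}. g (P m)) = real N * g a \<Longrightarrow> \<forall>m\<in>{1..N}. P m = a" using A(2) sA by simp
    have B1: "(real M - real N) * g b \<le> (\<Sum>m\<in>{N+1..M}. g (P m))" using B(1) sB cB by simp
    have B2: "(\<Sum>m\<in>{N+1..M}. g (P m)) = (real M - real N) * g b \<Longrightarrow> \<forall>m\<in>{N+1..M}. P m = b"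
      using B(2) sB cB by simp
    have PP: "\<Phi> P = (\<Sum>m\<in>{1..N}. g (P m)) + (\<Sum>m\<in>{N+1..M}. g (P m))"
      unfolding \<Phi>_def by (rule split[of "\<lambda>m. g (P m)"])
    have "\<Phi> ps \<le> \<Phi> P" using A1 B1 PP val by simp
    moreover have "\<forall>m\<in>{1..M}. P m = ps m" if e: "\<Phi> P = \<Phi> ps"
    proof -
      have "(\<Sum>m\<in>{1..N}. g (P m)) = real N * g a" "(\<Sum>m\<in>{N+1..M}. g (P m)) = (real M - real N) * g b"
        using A1 B1 PP val e by linarith+
      hence "\<forall>m\<in>{1..N}. P m = a" "\<forall>m\<in>{N+1..M}. P m = b" using A2 B2 by blast+
      thus ?thesis using ps(2,3) by (metis atLeastAtMost_iff not_less_eq_eq Suc_eq_plus1)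
    qed
    ultimately show ?thesis by blast
  qed
  have cong: "\<Phi> P = \<Phi> ps" if "\<forall>m\<in>{1..M}. P m = ps m" for P
    unfolding \<Phi>_def using that by simp
  show ?thesis
  proof (rule ballI, rule iffI)
    fix P assume P: "P \<in> F" and h: "\<forall>Q\<in>F. R P \<le> R Q"
    have "\<Phi> P \<le> \<Phi> ps" using h ps(1) rel P unfolding \<Phi>_def by blast
    thus "\<forall>m\<in>{1..M}. P m = ps m" using low[OF P] by simp
  next
    fix P assume P: "P \<in> F" and h: "\<forall>m\<in>{1..M}. P m = ps m"
    show "\<forall>Q\<in>F. R P \<le> R Q"
    proof
      fix Q assume Q: "Q \<in> F"
      have "\<Phi> P \<le> \<Phi> Q" using cong[OF h] low[OF Q] by simp
      thus "R P \<le> R Q" using rel P Q unfolding \<Phi>_def by blast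
    qed
  qed
qed


lemma renyi_one:
  fixes P :: "nat \<Rightarrow> real"
  assumes M: "0 < M" and nn: "\<forall>m\<in>{1..M}. 0 \<le> P m" and s: "sum P {1..M} = 1"
  shows "renyi_div 1 M P (uniform_dist M) = (\<Sum>m\<in>{1..M}. P m * ln (P m)) + ln (real M)"
proof -
  have t: "(if P m = 0 then 0 else P m * ln (P m / (1 / real M))) = P m * ln (P m) + P m * ln (real M)"
    if "m \<in> {1..M}" for m
  proof (cases "P m = 0")
    case False
    hence "0 < P m" using nn that by force
    thus ?thesis using M False by (simp add: ln_mult distrib_left)
  qed simp
  have "renyi_div 1 M P (uniform_dist M) = (\<Sum>m\<in>{1..M}. P m * ln (P m) + P m * ln (real M))"
    unfolding renyi_div_def uniform_dist_def using t by simp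
  also have "\<dots> = (\<Sum>m\<in>{1..M}. P m * ln (P m)) + ln (real M)"
    using s by (simp add: sum.distrib sum_distrib_right[symmetric])
  finally show ?thesis .
qed

lemma sum_pow_pos:
  fixes P :: "nat \<Rightarrow> real"
  assumes nn: "\<forall>m\<in>{1..M}. 0 \<le> P m" and s: "sum P {1..M} = 1"
  shows "0 < (\<Sum>m\<in>{1..M}. P m powr \<alpha>)"
proof -
  obtain j where j: "j \<in> {1..M}" "P j \<noteq> 0"
  proof (rule ccontr)
    assume "\<not> thesis"
    hence "\<forall>m\<in>{1..M}. P m = 0" using that by blast
    hence "sum P {1..M} = 0" by simp
    thus False using s by simp
  qed
  show ?thesis
    by (rule sum_pos2[OF _ j(1)]) (use j nn in auto)
qed

lemma renyi_pow:
  fixes P :: "nat \<Rightarrow> real"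
  assumes a: "\<alpha> \<noteq> 1" and M: "0 < M" and nn: "\<forall>m\<in>{1..M}. 0 \<le> P m" and s: "sum P {1..M} = 1"
  shows "renyi_div \<alpha> M P (uniform_dist M) =
          (ln ((1 / real M) powr (1 - \<alpha>)) + ln (\<Sum>m\<in>{1..M}. P m powr \<alpha>)) / (\<alpha> - 1)"
proof -
  have pos: "0 < (\<Sum>m\<in>{1..M}. P m powr \<alpha>)" by (rule sum_pow_pos[OF nn s])
  have cpos: "0 < (1 / real M) powr (1 - \<alpha>)" using M by simp
  have "(\<Sum>m\<in>{1..M}. P m powr \<alpha> * (1 / real M) powr (1 - \<alpha>))
        = (\<Sum>m\<in>{1..M}. P m powr \<alpha>) * (1 / real M) powr (1 - \<alpha>)"
    by (simp add: sum_distrib_right)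
  thus ?thesis unfolding renyi_div_def uniform_dist_def using a pos cpos
    by (simp add: ln_mult)
qed

lemma rel_div:
  fixes k s1 s2 \<alpha> :: real
  assumes "0 < s1" "0 < s2" "\<alpha> \<noteq> 1"
  shows "((k + ln s1) / (\<alpha> - 1) \<le> (k + ln s2) / (\<alpha> - 1)) \<longleftrightarrow>
         (if 1 < \<alpha> then s1 \<le> s2 else - s1 \<le> - s2)"
proof (cases "1 < \<alpha>")
  case True
  hence "((k + ln s1) / (\<alpha> - 1) \<le> (k + ln s2) / (\<alpha> - 1)) \<longleftrightarrow> ln s1 \<le> ln s2"
    by (simp add: divide_le_cancel)
  thus ?thesis using True assms by simp
next
  case False
  hence "\<alpha> - 1 < 0" using assms by simp
  hence "((k + ln s1) / (\<alpha> - 1) \<le> (k + ln s2) / (\<alpha> - 1)) \<longleftrightarrow> ln s2 \<le> ln s1"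
    by (simp add: divide_le_cancel)
  thus ?thesis using False assms by simp
qed

lemma part_ii_generic:
  fixes N M :: nat and a b :: real and ps :: "nat \<Rightarrow> real"
  assumes NM: "N \<le> M" and N1: "1 \<le> N"
    and Fc: "\<forall>P\<in>F. (\<forall>m\<in>{1..M}. 0 \<le> P m) \<and> sum P {1..N} = real N * a
                   \<and> sum P {N+1..M} = (real M - real N) * b"
    and a: "0 < a" and ba: "b \<le> a"
    and ps: "ps \<in> F" "\<forall>m\<in>{1..N}. ps m = a" "\<forall>m\<in>{N+1..M}. ps m = b"
  shows "\<forall>P\<in>F. (\<forall>Q\<in>F. renyi_div_inf M P (uniform_dist M) \<le> renyi_div_inf M Q (uniform_dist M))
        \<longleftrightarrow> ((\<forall>m\<in>{1..N}. P m = a)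
             \<and> (\<forall>m\<in>{N+1..M}. 0 \<le> P m \<and> P m \<le> a)
             \<and> (\<Sum>m\<in>{N+1..M}. P m) = (real M - real N) * b)"
proof -
  have M0: "0 < M" using NM N1 by simp
  define v where "v P = Max ((\<lambda>m. P m / uniform_dist M m) ` {1..M})" for P :: "nat \<Rightarrow> real"
  have fe: "finite ((\<lambda>m. P m / uniform_dist M m) ` {1..M})"
    "(\<lambda>m. P m / uniform_dist M m) ` {1..M} \<noteq> {}" for P using M0 by auto
  have dv: "P m / uniform_dist M m = P m * real M" for P :: "nat \<Rightarrow> real" and m
    unfolding uniform_dist_def by simp
  have le_iff: "v P \<le> a * real M \<longleftrightarrow> (\<forall>m\<in>{1..M}. P m \<le> a)" for P
    unfolding v_def using Max_le_iff[OF fe] M0 by (simp add: dv)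
  have ge: "a * real M \<le> v P" if P: "P \<in> F" for P
  proof -
    have sA: "sum P {1..N} = real N * a" using Fc P by auto
    obtain j where j: "j \<in> {1..N}" "a \<le> P j"
    proof (rule ccontr)
      assume "\<not> thesis"
      hence lt: "\<forall>m\<in>{1..N}. P m < a" using that by force
      have "sum P {1..N} < (\<Sum>m\<in>{1..N}. a)"
        by (rule sum_strict_mono) (use lt N1 in auto)
      thus False using sA by simp
    qed
    have "P j * real M \<le> v P" unfolding v_def using j NM
      by (intro Max_ge[OF fe(1)]) (auto simp: dv)
    moreover have "a * real M \<le> P j * real M" using j by (simp add: mult_right_mono)
    ultimately show ?thesis by linarith
  qed
  have vpos: "0 < v P" if "P \<in> F" for P
    using ge[OF that] a M0 by (smt (verit) mult_pos_pos of_nat_0_less_iff)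
  have vps: "v ps \<le> a * real M"
    unfolding le_iff using ps(2,3) ba by (metis atLeastAtMost_iff not_less_eq_eq Suc_eq_plus1 order_refl)
  have rdi: "renyi_div_inf M P (uniform_dist M) = ln (v P)" for P
    unfolding renyi_div_inf_def v_def by simp
  have char: "(\<forall>m\<in>{1..M}. P m \<le> a) \<longleftrightarrow> ((\<forall>m\<in>{1..N}. P m = a)
             \<and> (\<forall>m\<in>{N+1..M}. 0 \<le> P m \<and> P m \<le> a)
             \<and> (\<Sum>m\<in>{N+1..M}. P m) = (real M - real N) * b)" if P: "P \<in> F" for P
  proof
    assume h: "\<forall>m\<in>{1..M}. P m \<le> a"
    have sA: "sum P {1..N} = real N * a" using Fc P by auto
    have A: "\<forall>m\<in>{1..N}. P m = a"
    proof (rule ccontr)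
      assume "\<not> (\<forall>m\<in>{1..N}. P m = a)"
      then obtain j where j: "j \<in> {1..N}" "P j \<noteq> a" by blast
      have "sum P {1..N} < (\<Sum>m\<in>{1..N}. a)"
        by (rule sum_strict_mono_ex1) (use h j NM in \<open>auto simp: order.strict_iff_order\<close>)
      thus False using sA by simp
    qed
    show "(\<forall>m\<in>{1..N}. P m = a) \<and> (\<forall>m\<in>{N+1..M}. 0 \<le> P m \<and> P m \<le> a)
             \<and> (\<Sum>m\<in>{N+1..M}. P m) = (real M - real N) * b"
      using A h Fc P by auto
  next
    assume "(\<forall>m\<in>{1..N}. P m = a) \<and> (\<forall>m\<in>{N+1..M}. 0 \<le> P m \<and> P m \<le> a)
             \<and> (\<Sum>m\<in>{N+1..M}. P m) = (real M - real N) * b"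
    thus "\<forall>m\<in>{1..M}. P m \<le> a"
      by (metis atLeastAtMost_iff not_less_eq_eq Suc_eq_plus1 order_refl)
  qed
  show ?thesis
  proof (rule ballI)
    fix P assume P: "P \<in> F"
    have "(\<forall>Q\<in>F. ln (v P) \<le> ln (v Q)) \<longleftrightarrow> v P \<le> a * real M"
    proof
      assume "\<forall>Q\<in>F. ln (v P) \<le> ln (v Q)"
      hence "ln (v P) \<le> ln (v ps)" using ps(1) by blast
      hence "v P \<le> v ps" using vpos P ps(1) by simp
      thus "v P \<le> a * real M" using vps by simp
    next
      assume "v P \<le> a * real M"
      thus "\<forall>Q\<in>F. ln (v P) \<le> ln (v Q)" using ge vpos P by force
    qed
    thus "(\<forall>Q\<in>F. renyi_div_inf M P (uniform_dist M) \<le> renyi_div_inf M Q (uniform_dist M))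
        \<longleftrightarrow> ((\<forall>m\<in>{1..N}. P m = a)
             \<and> (\<forall>m\<in>{N+1..M}. 0 \<le> P m \<and> P m \<le> a)
             \<and> (\<Sum>m\<in>{N+1..M}. P m) = (real M - real N) * b)"
      unfolding rdi using le_iff char[OF P] by simp
  qed
qed


lemma geo_id:
  fixes L :: real and n :: nat
  assumes "0 \<le> L"
  shows "L * ((\<Sum>k<Suc n. (1 / (L + 1)) ^ k) - 1) = 1 - (1 / (L + 1)) ^ n"
proof (induction n)
  case 0 show ?case by simp
next
  case (Suc n)
  define q where "q = 1 / (L + 1)"
  have q: "1 - L * q = q" unfolding q_def using assms by (simp add: field_simps)
  have IH: "L * ((\<Sum>k<Suc n. q ^ k) - 1) = 1 - q ^ n" using Suc unfolding q_def .
  have "L * ((\<Sum>k<Suc (Suc n). q ^ k) - 1) = L * ((\<Sum>k<Suc n. q ^ k) - 1) + L * q ^ Suc n"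
    by (simp add: algebra_simps)
  also have "\<dots> = 1 - q ^ n * (1 - L * q)" using IH by (simp add: algebra_simps)
  also have "\<dots> = 1 - q ^ Suc n" using q by simp
  finally show ?case unfolding q_def .
qed


theorem lemma2:
  fixes N K L :: nat and D :: real
  assumes hN: "N \<ge> 3" and hK: "K \<ge> 2" and hL1: "1 \<le> L" and hL2: "L < N - 1"
    and hD1: "1 \<le> D" and hD2: "D \<le> 1 / const_C N K"
  defines "M \<equiv> num_opts N K L"
    and "U \<equiv> uniform_dist (num_opts N K L)"
    and "F \<equiv> feasible N K L D"
    and "pstar \<equiv> (\<lambda>m. if m \<le> N then (1 - real L * (D - 1)) / real N
                        else real L * (D - 1) / (real N * (real L + 1) ^ (K - 1) - real N))"
  shows
    "(\<forall>\<alpha>::real. 0 < \<alpha> \<longrightarrow>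
        pstar \<in> F \<and>
        (\<forall>P\<in>F. (\<forall>Q\<in>F. renyi_div \<alpha> M P U \<le> renyi_div \<alpha> M Q U)
                 \<longleftrightarrow> (\<forall>m\<in>{1..M}. P m = pstar m)))
     \<and>
     (\<forall>P\<in>F. (\<forall>Q\<in>F. renyi_div_inf M P U \<le> renyi_div_inf M Q U)
        \<longleftrightarrow> ((\<forall>m\<in>{1..N}. P m = (1 - real L * (D - 1)) / real N)
             \<and> (\<forall>m\<in>{N+1..M}. 0 \<le> P m \<and> P m \<le> (1 - real L * (D - 1)) / real N)
             \<and> (\<Sum>m\<in>{N+1..M}. P m) = real L * (D - 1)))"
proof -
  define x where "x = real L * (D - 1)"
  define a where "a = (1 - real L * (D - 1)) / real N"
  define b where "b = real L * (D - 1) / (real N * (real L + 1) ^ (K - 1) - real N)"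
  define q where "q = 1 / (real L + 1)"
  have UM: "U = uniform_dist M" unfolding U_def M_def ..
  have realM: "real M = real N * (real L + 1) ^ (K - 1)"
    unfolding M_def num_opts_def by (simp add: add.commute)
  have N1: "1 \<le> N" and LN: "real L + 1 \<le> real N" using hN hL2 by auto
  have pw: "2 \<le> (real L + 1) ^ (K - 1)"
  proof -
    have "(2::real) ^ 1 \<le> 2 ^ (K - 1)" by (rule power_increasing) (use hK in auto)
    also have "\<dots> \<le> (real L + 1) ^ (K - 1)" by (rule power_mono) (use hL1 in auto)
    finally show ?thesis by simp
  qed
  have MN: "real N < real M"
  proof -
    have "real N * 1 < real N * (real L + 1) ^ (K - 1)" using pw N1 by (intro mult_strict_left_mono) auto
    thus ?thesis using realM by simp
  qed
  hence NM: "N \<le> M" by simp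
  have bx: "b = x / (real M - real N)" unfolding b_def x_def realM ..
  have x0: "0 \<le> x" unfolding x_def using hD1 by simp
  have Dle: "D \<le> (\<Sum>k<K. 1 / real N ^ k)"
  proof -
    have "0 < (\<Sum>k<K. 1 / real N ^ k)" using hK N1 by (intro sum_pos) (auto simp: lessThan_empty_iff)
    thus ?thesis using hD2 unfolding const_C_def by simp
  qed
  have "(\<Sum>k<K. 1 / real N ^ k) \<le> (\<Sum>k<K. q ^ k)"
  proof (rule sum_mono)
    fix k assume "k \<in> {..<K}"
    have "1 / real N \<le> q" unfolding q_def using LN by (intro divide_left_mono) auto
    hence "(1 / real N) ^ k \<le> q ^ k" by (intro power_mono) auto
    thus "1 / real N ^ k \<le> q ^ k" by (simp add: power_one_over)
  qed
  hence Dq: "D - 1 \<le> (\<Sum>k<Suc (K - 1). q ^ k) - 1" using Dle hK by simp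
  have xq: "x \<le> 1 - q ^ (K - 1)"
  proof -
    have "x \<le> real L * ((\<Sum>k<Suc (K - 1). q ^ k) - 1)" unfolding x_def
      using Dq by (intro mult_left_mono) auto
    thus ?thesis using geo_id[of "real L" "K - 1"] unfolding q_def by simp
  qed
  have qpos: "0 < q ^ (K - 1)" unfolding q_def by simp
  have x1: "x < 1" using xq qpos by simp
  have apos: "0 < a" unfolding a_def x_def[symmetric] using x1 N1 by simp
  have b0: "0 \<le> b" unfolding bx using x0 MN by simp
  have qM: "q ^ (K - 1) = real N / real M"
    unfolding q_def realM using N1 by (simp add: power_one_over)
  have ba: "b \<le> a"
  proof -
    have "x * real M \<le> (1 - q ^ (K - 1)) * real M" using xq by (intro mult_right_mono) auto
    also have "\<dots> = real M - real N" using qM MN by (simp add: field_simps)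
    finally have "x * real M \<le> real M - real N" .
    hence "x * real N \<le> (1 - x) * (real M - real N)" by (simp add: algebra_simps)
    thus ?thesis unfolding bx a_def x_def[symmetric] using MN N1
      by (simp add: divide_simps mult.commute)
  qed
  have NA: "real N * a = 1 - x" unfolding a_def x_def using N1 by simp
  have MB: "(real M - real N) * b = x" unfolding bx using MN by simp
  have split: "sum f {1..M} = sum f {1..N} + sum f {N+1..M}" for f :: "nat \<Rightarrow> real"
    using sum.ub_add_nat[of 1 N f "M - N"] NM by simp
  have Fchar: "P \<in> F \<longleftrightarrow> (\<forall>m\<in>{1..M}. 0 \<le> P m) \<and> sum P {1..N} = real N * a
                   \<and> sum P {N+1..M} = (real M - real N) * b" for P
  proof -
    have cA: "(\<Sum>m\<in>{1..N}. P m * cost N L m) = real L * sum P {1..N}"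
      by (simp add: cost_def sum_distrib_left mult.commute)
    have cB: "(\<Sum>m\<in>{N+1..M}. P m * cost N L m) = (real L + 1) * sum P {N+1..M}"
      by (simp add: cost_def sum_distrib_left mult.commute)
    have cost: "(\<Sum>m\<in>{1..M}. P m * cost N L m) = real L * (sum P {1..N} + sum P {N+1..M}) + sum P {N+1..M}"
      using split[of "\<lambda>m. P m * cost N L m"] cA cB by (simp add: algebra_simps)
    have L0: "0 < real L" using hL1 by simp
    have "P \<in> F \<longleftrightarrow> (\<forall>m\<in>{1..M}. 0 \<le> P m) \<and> sum P {1..N} + sum P {N+1..M} = 1
          \<and> (1 / real L) * (real L * (sum P {1..N} + sum P {N+1..M}) + sum P {N+1..M}) = D"
      unfolding F_def feasible_def M_def[symmetric] using split[of P] cost by simp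
    also have "\<dots> \<longleftrightarrow> (\<forall>m\<in>{1..M}. 0 \<le> P m) \<and> sum P {1..N} = 1 - x \<and> sum P {N+1..M} = x"
    proof -
      have e: "(1 / real L) * (real L * (sA + sB) + sB) = D \<and> sA + sB = 1 \<longleftrightarrow> sA = 1 - x \<and> sB = x"
        for sA sB :: real
      proof
        assume h: "(1 / real L) * (real L * (sA + sB) + sB) = D \<and> sA + sB = 1"
        hence "(1 / real L) * (real L * 1 + sB) = D" by (metis (no_types))
        hence "(1 / real L) * (real L + sB) = D" by simp
        hence "real L + sB = real L * D" using L0 by (simp add: field_simps)
        hence "sB = x" unfolding x_def by (simp add: algebra_simps)
        thus "sA = 1 - x \<and> sB = x" using h by simp
      next
        assume h: "sA = 1 - x \<and> sB = x"
        hence s1: "sA + sB = 1" by simp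
        have "real L * (sA + sB) + sB = real L + x" using s1 h by simp
        also have "\<dots> = real L * D" unfolding x_def by (simp add: algebra_simps)
        finally have "real L * (sA + sB) + sB = real L * D" .
        thus "(1 / real L) * (real L * (sA + sB) + sB) = D \<and> sA + sB = 1" using h L0 by simp
      qed
      show ?thesis using e[of "sum P {1..N}" "sum P {N+1..M}"] by blast
    qed
    finally show ?thesis using NA MB by simp
  qed
  have Fc: "\<forall>P\<in>F. (\<forall>m\<in>{1..M}. 0 \<le> P m) \<and> sum P {1..N} = real N * a
                   \<and> sum P {N+1..M} = (real M - real N) * b" using Fchar by blast
  have psA: "\<forall>m\<in>{1..N}. pstar m = a" unfolding pstar_def a_def by simp
  have psB: "\<forall>m\<in>{N+1..M}. pstar m = b" unfolding pstar_def b_def by simp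
  have psF: "pstar \<in> F"
  proof -
    have "\<forall>m\<in>{1..M}. 0 \<le> pstar m" unfolding pstar_def
      using apos b0 unfolding a_def b_def by auto
    moreover have "sum pstar {1..N} = real N * a" using psA by simp
    moreover have "sum pstar {N+1..M} = (real M - real N) * b" using psB NM by (simp add: of_nat_diff)
    ultimately show ?thesis using Fchar by blast
  qed
  have sum1: "\<forall>m\<in>{1..M}. 0 \<le> P m" "sum P {1..M} = 1" if "P \<in> F" for P
    using Fc that split[of P] NA MB by auto
  have M0: "0 < M" using NM N1 by simp
  have part1: "pstar \<in> F \<and> (\<forall>P\<in>F. (\<forall>Q\<in>F. renyi_div \<alpha> M P U \<le> renyi_div \<alpha> M Q U)
                 \<longleftrightarrow> (\<forall>m\<in>{1..M}. P m = pstar m))" if al: "0 < \<alpha>" for \<alpha> :: real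
  proof -
    consider "\<alpha> = 1" | "1 < \<alpha>" | "\<alpha> < 1" by linarith
    hence "\<forall>P\<in>F. (\<forall>Q\<in>F. renyi_div \<alpha> M P U \<le> renyi_div \<alpha> M Q U)
                 \<longleftrightarrow> (\<forall>m\<in>{1..M}. P m = pstar m)"
    proof cases
      case 1
      show ?thesis
      proof (rule part_i_generic[OF NM Fc less_imp_le[OF apos] b0 psF psA psB tang_xlogx])
        show "\<forall>P\<in>F. \<forall>Q\<in>F. (renyi_div \<alpha> M P U \<le> renyi_div \<alpha> M Q U) =
          ((\<Sum>m = 1..M. P m * ln (P m)) \<le> (\<Sum>m = 1..M. Q m * ln (Q m)))"
          using renyi_one[OF M0] sum1 1 UM by simp
      qed
    next
      case 2
      show ?thesis
      proof (rule part_i_generic[OF NM Fc less_imp_le[OF apos] b0 psF psA psB tang_pow_gt1[OF 2]])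
        show "\<forall>P\<in>F. \<forall>Q\<in>F. (renyi_div \<alpha> M P U \<le> renyi_div \<alpha> M Q U) =
          ((\<Sum>m = 1..M. P m powr \<alpha>) \<le> (\<Sum>m = 1..M. Q m powr \<alpha>))"
        proof (intro ballI)
          fix P Q assume P: "P \<in> F" and Q: "Q \<in> F"
          show "(renyi_div \<alpha> M P U \<le> renyi_div \<alpha> M Q U) =
            ((\<Sum>m = 1..M. P m powr \<alpha>) \<le> (\<Sum>m = 1..M. Q m powr \<alpha>))"
          proof -
            define k where "k = ln ((1 / real M) powr (1 - \<alpha>))"
            have ne: "\<alpha> \<noteq> 1" using 2 by simp
            have rP: "renyi_div \<alpha> M P U = (k + ln (\<Sum>m\<in>{1..M}. P m powr \<alpha>)) / (\<alpha> - 1)"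
              unfolding UM k_def by (rule renyi_pow[OF ne M0 sum1[OF P]])
            have rQ: "renyi_div \<alpha> M Q U = (k + ln (\<Sum>m\<in>{1..M}. Q m powr \<alpha>)) / (\<alpha> - 1)"
              unfolding UM k_def by (rule renyi_pow[OF ne M0 sum1[OF Q]])
            show ?thesis unfolding rP rQ
              using 2 rel_div[OF sum_pow_pos[OF sum1[OF P]] sum_pow_pos[OF sum1[OF Q]] ne, of k] by simp
          qed
        qed
      qed
    next
      case 3
      show ?thesis
      proof (rule part_i_generic[OF NM Fc less_imp_le[OF apos] b0 psF psA psB tang_pow_lt1[OF al 3]])
        show "\<forall>P\<in>F. \<forall>Q\<in>F. (renyi_div \<alpha> M P U \<le> renyi_div \<alpha> M Q U) =
          ((\<Sum>m = 1..M. - (P m powr \<alpha>)) \<le> (\<Sum>m = 1..M. - (Q m powr \<alpha>)))"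
        proof (intro ballI)
          fix P Q assume P: "P \<in> F" and Q: "Q \<in> F"
          show "(renyi_div \<alpha> M P U \<le> renyi_div \<alpha> M Q U) =
            ((\<Sum>m = 1..M. - (P m powr \<alpha>)) \<le> (\<Sum>m = 1..M. - (Q m powr \<alpha>)))"
          proof -
            define k where "k = ln ((1 / real M) powr (1 - \<alpha>))"
            have ne: "\<alpha> \<noteq> 1" using 3 by simp
            have rP: "renyi_div \<alpha> M P U = (k + ln (\<Sum>m\<in>{1..M}. P m powr \<alpha>)) / (\<alpha> - 1)"
              unfolding UM k_def by (rule renyi_pow[OF ne M0 sum1[OF P]])
            have rQ: "renyi_div \<alpha> M Q U = (k + ln (\<Sum>m\<in>{1..M}. Q m powr \<alpha>)) / (\<alpha> - 1)"
              unfolding UM k_def by (rule renyi_pow[OF ne M0 sum1[OF Q]])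
            show ?thesis unfolding rP rQ sum_negf
              using 3 rel_div[OF sum_pow_pos[OF sum1[OF P]] sum_pow_pos[OF sum1[OF Q]] ne, of k] by simp
          qed
        qed
      qed
    qed
    thus ?thesis using psF by blast
  qed
  note part2 = part_ii_generic[OF NM N1 Fc apos ba psF psA psB]
  show ?thesis
    using part1 part2 unfolding UM[symmetric] MB a_def x_def by blast
qed

end
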